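(* Let $\beta_1,\beta_2,\beta_3$ be pairwise distinct with $|\beta_3-\beta_1|<|\beta_3-\beta_2|$ and $|\beta_3-\beta_1|<|\beta_2-\beta_1|$. Assume $\alpha_3-\alpha_1\in\mathbb{Z}_{\le-4}$ and $\alpha_2-\alpha_1,\alpha_3-\alpha_2\notin\mathbb{Z}_{\le-2}$, and set $N=\alpha_1-\alpha_3$, $b_n=(-1)^n\frac{(2+\alpha_3-\alpha_2)^{(n)}}{(\beta_3-\beta_2)^n}$, $c_n=(-1)^n\frac{(2+\alpha_2-\alpha_1)^{(n)}}{(\beta_2-\beta_1)^n}$, and $\hat\omega(x)=\big(\sum_{n\ge0}c_nx^n\big)\big(\sum_{n\ge0}b_nx^n\big)$. Then for every direction $\theta\notin\{\arg(\beta_1-\beta_2),\arg(\beta_1-\beta_3),\arg(\beta_2-\beta_3)\}$ the 1-sum $\omega_\theta$ of $\hat\omega$ in direction $\theta$ satisfies $$(\beta_3-\beta_1)\omega_\theta(x)=\sum_{l=0}^{N-4}\big[(\beta_2-\beta_1)b_l+(\beta_3-\beta_2)c_l\big]x^l\Big(\sum_{s=0}^{N-4-l}(-1)^s\frac{(4+l+\alpha_3-\alpha_1)^{(s)}}{(\beta_3-\beta_1)^s}x^s\Big)$$ $$+x^{N-3}\Big[b_{N-3}(\beta_2-\beta_1)\int_0^{+\infty e^{i\theta}}\Big(1+\frac{\xi}{\beta_3-\beta_2}\Big)^{1+\alpha_2-\alpha_1}\Big(1+\frac{\xi}{\beta_3-\beta_1}\Big)^{-1}e^{-\xi/x}d\Big(\frac{\xi}{x}\Big)$$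 $$+c_{N-3}(\beta_3-\beta_2)\int_0^{+\infty e^{i\theta}}\Big(1+\frac{\xi}{\beta_2-\beta_1}\Big)^{1+\alpha_3-\alpha_2}\Big(1+\frac{\xi}{\beta_3-\beta_1}\Big)^{-1}e^{-\xi/x}d\Big(\frac{\xi}{x}\Big)\Big].$$
   Context: $(a)^{(n)}=a(a+1)\cdots(a+n-1)$, $(a)^{(0)}=1$; complex powers use the principal branch. The 1-sum in direction $\theta$ of a Gevrey-1 series $\sum f_nx^n$ is $\int_0^{+\infty e^{i\theta}}h(\zeta)e^{-\zeta/x}d(\zeta/x)$, where $h$ is the analytic continuation (of at most exponential growth near the ray) of the Borel transform $\sum f_n\zeta^n/n!$. *)

theory Defs
  imports "HOL-Analysis.Analysis"
begin

definition ray_laplace :: "real \<Rightarrow> (complex \<Rightarrow> complex) \<Rightarrow> complex \<Rightarrow> complex" where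
  "ray_laplace \<theta> g x =
     integral {0..} (\<lambda>t::real. g (of_real t * cis \<theta>) * exp (- (of_real t * cis \<theta>) / x) * (cis \<theta> / x))"

text \<open>h is an analytic continuation, to an open neighbourhood of the closed ray of direction
  theta, of the Borel transform (sum of f n zeta^n / n!) of the formal series with coefficients f,
  with at most exponential growth (rate K) along the ray.\<close>
definition borel_continuation ::
  "(nat \<Rightarrow> complex) \<Rightarrow> real \<Rightarrow> (complex \<Rightarrow> complex) \<Rightarrow> real \<Rightarrow> bool" where
  "borel_continuation f \<theta> h K \<longleftrightarrow>
     (\<exists>S r C. open S \<and> 0 < r \<and> ball 0 r \<subseteq> S \<and> (\<forall>t\<ge>0. of_real t * cis \<theta> \<in> S) \<and>
        h holomorphic_on S \<and>
        (\<forall>\<zeta>\<in>ball 0 r. (\<lambda>n. f n / fact n * \<zeta> ^ n) sums h \<zeta>) \<and>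
        (\<forall>t\<ge>0. norm (h (of_real t * cis \<theta>)) \<le> C * exp (K * t)))"

end

theory Submission
  imports Defs "HOL-Complex_Analysis.Complex_Analysis" "HOL-Real_Asymp.Real_Asymp"
begin

lemma ray_dist:
  fixes u :: complex and \<theta> :: real
  assumes u: "u \<noteq> 0" and d: "\<And>k::int. \<theta> \<noteq> Arg u + 2*pi * of_int k"
  shows "\<exists>\<delta>>0. \<forall>t\<ge>0. \<delta> \<le> norm (of_real t * cis \<theta> - u)"
proof -
  define v where "v = u * cis (-\<theta>)"
  have eq: "norm (of_real t * cis \<theta> - u) = norm (of_real t - v)" for t
  proof -
    have "of_real t * cis \<theta> - u = cis \<theta> * (of_real t - v)"
      by (simp add: v_def algebra_simps cis_mult)
    thus ?thesis by (simp add: norm_mult)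
  qed
  show ?thesis
  proof (cases "Im v = 0")
    case False
    show ?thesis
    proof (intro exI[of _ "\<bar>Im v\<bar>"] conjI allI impI)
      show "0 < \<bar>Im v\<bar>" using False by simp
      fix t :: real
      have "\<bar>Im v\<bar> = \<bar>Im (of_real t - v)\<bar>" by simp
      also have "\<dots> \<le> norm (of_real t - v)" by (rule abs_Im_le_cmod)
      finally show "\<bar>Im v\<bar> \<le> norm (of_real t * cis \<theta> - u)" using eq by simp
    qed
  next
    case True
    have vr: "v = of_real (Re v)" using True by (simp add: complex_eq_iff)
    have uv: "u = v * cis \<theta>" by (simp add: v_def cis_mult)
    have neg: "Re v < 0"
    proof (rule ccontr)
      assume "\<not> Re v < 0"
      moreover have "Re v \<noteq> 0" using u uv vr by (metis mult_eq_0_iff of_real_0)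
      ultimately have pos: "Re v > 0" by simp
      have "sgn u = cis \<theta>"
        using pos by (subst uv, subst vr) (simp add: sgn_mult sgn_of_real)
      moreover have "sgn u = cis (Arg u)" using u by (simp add: cis_Arg)
      ultimately have "exp (\<i> * complex_of_real \<theta>) = exp (\<i> * complex_of_real (Arg u))"
        by (simp add: cis_conv_exp)
      then obtain n :: int where "\<i> * complex_of_real \<theta> = \<i> * complex_of_real (Arg u) + (of_int (2 * n) * pi) * \<i>"
        unfolding exp_eq by blast
      hence "complex_of_real \<theta> = complex_of_real (Arg u + 2*pi * of_int n)"
      proof -
        have "\<i> * complex_of_real \<theta> = \<i> * (complex_of_real (Arg u) + of_int n * (of_real pi * 2))"
          using \<open>\<i> * complex_of_real \<theta> = _\<close> by (simp add: algebra_simps)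
        hence "complex_of_real \<theta> = complex_of_real (Arg u) + of_int n * (of_real pi * 2)"
          by (metis complex_i_not_zero mult_left_cancel)
        thus ?thesis by (simp add: algebra_simps)
      qed
      hence "\<theta> = Arg u + 2*pi * of_int n" using of_real_eq_iff by blast
      thus False using d by blast
    qed
    show ?thesis
    proof (intro exI[of _ "- Re v"] conjI allI impI)
      show "0 < - Re v" using neg by simp
      fix t :: real assume "0 \<le> t"
      have "- Re v \<le> Re (of_real t - v)" using \<open>0 \<le> t\<close> by simp
      also have "\<dots> \<le> norm (of_real t - v)" by (rule complex_Re_le_cmod)
      finally show "- Re v \<le> norm (of_real t * cis \<theta> - u)" using eq by simp
    qed
  qed
qed

definition good :: "(real \<Rightarrow> complex) \<Rightarrow> real \<Rightarrow> bool" where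
  "good f c \<longleftrightarrow> (\<exists>C a. a < c \<and> (\<forall>t\<ge>0. norm (f t) \<le> C * exp (a * t)))"

lemma norm_exp_ray: "norm (exp (- (of_real t * w))) = exp (- (t * Re w))"
  by (simp add: norm_exp_eq_Re)

lemma good_bound:
  assumes "good f c"
  obtains C d where "0 \<le> C" "d > 0" "\<And>t. t \<ge> 0 \<Longrightarrow> norm (f t) * exp (- (t * c)) \<le> C * exp (- (d * t))"
proof -
  obtain C a where a: "a < c" and b: "\<And>t. t\<ge>0 \<Longrightarrow> norm (f t) \<le> C * exp (a * t)"
    using assms unfolding good_def by blast
  have C0: "0 \<le> C" using b[of 0] by (smt (verit) exp_zero mult_cancel_left1 norm_ge_zero)
  show ?thesis
  proof (rule that[of C "c - a"])
    fix t :: real assume t: "t \<ge> 0"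
    have "norm (f t) * exp (- (t * c)) \<le> C * exp (a * t) * exp (- (t * c))"
      using b[OF t] by (intro mult_right_mono) auto
    also have "\<dots> = C * exp (- ((c - a) * t))" by (simp add: mult.assoc exp_add[symmetric] algebra_simps)
    finally show "norm (f t) * exp (- (t * c)) \<le> C * exp (- ((c - a) * t))" .
  qed (use C0 a in auto)
qed

lemma lap_integrable:
  assumes cf: "continuous_on {0..} f" and g: "good f (Re w)"
  shows "(\<lambda>t. f t * exp (- (of_real t * w))) integrable_on {0..}"
proof -
  obtain C d where C: "0 \<le> C" "d > 0" and b: "\<And>t. t \<ge> 0 \<Longrightarrow> norm (f t) * exp (- (t * Re w)) \<le> C * exp (- (d * t))"
    using good_bound[OF g] by blast
  have gi: "(\<lambda>t. C * exp (- d * t)) integrable_on {0..}"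
    using integrable_on_cmult_left[OF integrable_on_exp_minus_to_infinity[OF \<open>d>0\<close>, of 0], of C]
    by simp
  show ?thesis
  proof (rule measurable_bounded_by_integrable_imp_integrable[OF _ gi])
    show "(\<lambda>t. f t * exp (- (of_real t * w))) \<in> borel_measurable (lebesgue_on {0..})"
      by (intro continuous_imp_measurable_on_sets_lebesgue continuous_intros cf) auto
    show "{0::real..} \<in> sets lebesgue" by auto
    fix t :: real assume "t \<in> {0..}"
    thus "norm (f t * exp (- (of_real t * w))) \<le> C * exp (- d * t)"
      using b[of t] by (simp add: norm_mult norm_exp_ray)
  qed
qed

lemma good_antideriv:
  assumes c: "c > 0"
    and der: "\<And>t. t \<ge> 0 \<Longrightarrow> (f has_vector_derivative f' t) (at t within {0..})"
    and g: "good f' c"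
  shows "good f c"
proof -
  obtain C a where a: "a < c" and b: "\<And>t. t\<ge>0 \<Longrightarrow> norm (f' t) \<le> C * exp (a * t)"
    using g unfolding good_def by blast
  define a1 where "a1 = max a 0"
  define \<delta> where "\<delta> = (c - a1) / 2"
  have a1c: "a1 < c" "a1 \<ge> 0" using a c by (auto simp: a1_def)
  have \<delta>: "\<delta> > 0" "a1 + \<delta> < c" "a1 \<ge> 0" using a1c unfolding \<delta>_def by (auto simp: field_simps)
  have C0: "0 \<le> C" using b[of 0] by (smt (verit) exp_zero mult_cancel_left1 norm_ge_zero)
  have "\<forall>t\<ge>0. norm (f t) \<le> (norm (f 0) + C / \<delta>) * exp ((a1 + \<delta>) * t)"
  proof (intro allI impI)
    fix t :: real assume t: "t \<ge> 0"
    have Hint: "(f' has_integral (f t - f 0)) {0..t}"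
      by (rule fundamental_theorem_of_calculus[OF t])
         (auto intro: has_vector_derivative_within_subset[OF der])
    have B0: "0 \<le> C * exp (a1 * t)" using C0 by simp
    have hb: "norm (f' x) \<le> C * exp (a1 * t)" if x: "x \<in> {0..t} - {}" for x
    proof -
      have "norm (f' x) \<le> C * exp (a * x)" using b x by auto
      also have "\<dots> \<le> C * exp (a1 * t)"
        using x C0 \<delta>(3) by (intro mult_left_mono) (auto simp: a1_def intro!: mult_mono)
      finally show ?thesis .
    qed
    have "norm (f t - f 0) \<le> C * exp (a1 * t) * (t - 0)"
      using has_integral_bound_real[OF B0 finite.emptyI Hint hb] t by simp
    hence n1: "norm (f t - f 0) \<le> C * exp (a1 * t) * t" using t by simp
    have "\<delta> * t \<le> exp (\<delta> * t)" using exp_ge_add_one_self[of "\<delta> * t"] by linarith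
    hence tt: "t \<le> exp (\<delta> * t) / \<delta>" using \<delta> by (simp add: field_simps)
    have "C * exp (a1 * t) * t \<le> C * exp (a1 * t) * (exp (\<delta> * t) / \<delta>)"
      using tt C0 by (intro mult_left_mono) auto
    also have "\<dots> = C / \<delta> * exp ((a1 + \<delta>) * t)" by (simp add: exp_add distrib_right)
    finally have n2: "norm (f t - f 0) \<le> C / \<delta> * exp ((a1 + \<delta>) * t)" using n1 by linarith
    have e1: "1 \<le> exp ((a1 + \<delta>) * t)" using t \<delta> by simp
    have "norm (f t) \<le> norm (f 0) + norm (f t - f 0)" by (metis norm_triangle_sub add.commute)
    also have "\<dots> \<le> norm (f 0) * exp ((a1 + \<delta>) * t) + C / \<delta> * exp ((a1 + \<delta>) * t)"
      using n2 e1 by (smt (verit) mult_left_mono norm_ge_zero mult.commute mult_cancel_right1)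
    also have "\<dots> = (norm (f 0) + C / \<delta>) * exp ((a1 + \<delta>) * t)" by (simp add: algebra_simps)
    finally show "norm (f t) \<le> (norm (f 0) + C / \<delta>) * exp ((a1 + \<delta>) * t)" .
  qed
  thus ?thesis unfolding good_def using \<delta>(2) by blast
qed

lemma lap_ibp:
  assumes w: "Re w > 0"
    and der: "\<And>t. t \<ge> 0 \<Longrightarrow> (f has_vector_derivative f' t) (at t within {0..})"
    and cf': "continuous_on {0..} f'"
    and gf: "good f (Re w)" and gf': "good f' (Re w)"
  shows "integral {0..} (\<lambda>t. f t * exp (- (of_real t * w)) * w)
           = f 0 + integral {0..} (\<lambda>t. f' t * exp (- (of_real t * w)))"
proof -
  define E where "E = (\<lambda>t::real. exp (- (of_real t * w)))"
  define G where "G = (\<lambda>t. f t * E t * w - f' t * E t)"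
  define \<Phi> where "\<Phi> = (\<lambda>t. - f t * E t)"
  have cf: "continuous_on {0..} f"
    by (rule continuous_on_vector_derivative) (use der in auto)
  have dE: "(E has_vector_derivative (- w * E t)) (at t within X)" for t X
  proof -
    have "((\<lambda>z. exp (- (z * w))) has_field_derivative (exp (- (of_real t * w)) * (- w))) (at (of_real t))"
      by (auto intro!: derivative_eq_intros)
    from has_vector_derivative_real_field[OF this] show ?thesis
      by (simp add: E_def mult.commute)
  qed
  have d\<Phi>: "(\<Phi> has_vector_derivative G t) (at t within {0..})" if "t \<ge> 0" for t
    unfolding \<Phi>_def G_def
    using has_vector_derivative_mult[OF has_vector_derivative_minus[OF der[OF that]] dE[of t "{0..}"]]
    by (simp add: algebra_simps)
  have I1: "(\<lambda>t. f t * E t) integrable_on {0..}" unfolding E_def by (rule lap_integrable[OF cf gf])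
  have I2: "(\<lambda>t. f' t * E t) integrable_on {0..}" unfolding E_def by (rule lap_integrable[OF cf' gf'])
  have I1w: "(\<lambda>t. f t * E t * w) integrable_on {0..}" by (rule integrable_on_mult_left[OF I1])
  obtain C1 d1 where C1: "0 \<le> C1" "d1 > 0" and b1: "\<And>t. t \<ge> 0 \<Longrightarrow> norm (f t) * exp (- (t * Re w)) \<le> C1 * exp (- (d1 * t))"
    using good_bound[OF gf] by blast
  obtain C2 d2 where C2: "0 \<le> C2" "d2 > 0" and b2: "\<And>t. t \<ge> 0 \<Longrightarrow> norm (f' t) * exp (- (t * Re w)) \<le> C2 * exp (- (d2 * t))"
    using good_bound[OF gf'] by blast
  define d where "d = min d1 d2"
  have d: "d > 0" using C1 C2 by (simp add: d_def)
  define B where "B = (\<lambda>t::real. (C1 * norm w + C2) * exp (- d * t))"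
  have Bi: "B integrable_on {0..}"
    unfolding B_def using integrable_on_cmult_left[OF integrable_on_exp_minus_to_infinity[OF d, of 0], of "C1 * norm w + C2"]
    by simp
  have bG: "norm (G t) \<le> B t" if t: "t \<ge> 0" for t
  proof -
    have e1: "exp (- (d1 * t)) \<le> exp (- d * t)" "exp (- (d2 * t)) \<le> exp (- d * t)"
      using t by (auto simp: d_def intro!: mult_right_mono)
    have "norm (G t) \<le> norm (f t * E t * w) + norm (f' t * E t)"
      unfolding G_def by (rule norm_triangle_ineq4)
    also have "\<dots> = norm (f t) * exp (- (t * Re w)) * norm w + norm (f' t) * exp (- (t * Re w))"
      by (simp add: E_def norm_mult norm_exp_ray)
    also have "\<dots> \<le> C1 * exp (- (d1 * t)) * norm w + C2 * exp (- (d2 * t))"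
      using b1[OF t] b2[OF t] by (intro add_mono mult_right_mono) auto
    also have "\<dots> \<le> C1 * exp (- d * t) * norm w + C2 * exp (- d * t)"
      using e1 C1 C2 by (intro add_mono mult_right_mono mult_left_mono) auto
    also have "\<dots> = B t" by (simp add: B_def algebra_simps)
    finally show ?thesis .
  qed
  define fk where "fk = (\<lambda>k::nat. \<lambda>t. if t \<in> {..real k} then G t else 0)"
  have Gint: "(G has_integral (\<Phi> T - \<Phi> 0)) {0..T}" if "T \<ge> 0" for T
    by (rule fundamental_theorem_of_calculus[OF that])
       (auto intro: has_vector_derivative_within_subset[OF d\<Phi>])
  have fk_int: "integral {0..} (fk k) = \<Phi> (real k) - \<Phi> 0" for k
  proof -
    have "integral {0..} (fk k) = integral ({..real k} \<inter> {0..}) G"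
      unfolding fk_def by (rule integral_restrict_Int)
    also have "{..real k} \<inter> {0..} = {0..real k}" by auto
    finally show ?thesis using Gint[of "real k"] by (simp add: integral_unique)
  qed
  have dc: "(\<lambda>k. integral {0..} (fk k)) \<longlonglongrightarrow> integral {0..} G"
  proof (rule dominated_convergence(2)[OF _ Bi])
    fix k :: nat
    have "G integrable_on ({..real k} \<inter> {0..})"
      using Gint[of "real k"] by (auto simp: Int_commute atLeastAtMost_def)
    thus "fk k integrable_on {0..}" unfolding fk_def by (subst integrable_restrict_Int)
  next
    fix k :: nat and t :: real assume "t \<in> {0..}"
    thus "norm (fk k t) \<le> B t" using bG[of t] C1 C2 by (auto simp: fk_def B_def intro!: mult_nonneg_nonneg)
  next
    fix t :: real assume "t \<in> {0..}"
    have "eventually (\<lambda>k. fk k t = G t) sequentially"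
      using eventually_ge_at_top[of "nat \<lceil>t\<rceil>"]
    proof eventually_elim
      case (elim k)
      have "t \<le> real (nat \<lceil>t\<rceil>)" by (rule real_nat_ceiling_ge)
      also have "\<dots> \<le> real k" using elim by simp
      finally show ?case by (simp add: fk_def)
    qed
    thus "(\<lambda>k. fk k t) \<longlonglongrightarrow> G t" by (rule tendsto_eventually)
  qed
  have \<Phi>lim: "(\<lambda>k. \<Phi> (real k)) \<longlonglongrightarrow> 0"
  proof (rule Lim_null_comparison)
    show "eventually (\<lambda>k. norm (\<Phi> (real k)) \<le> C1 * exp (- (d1 * real k))) sequentially"
      using b1 by (auto simp: \<Phi>_def E_def norm_mult norm_exp_ray)
    show "(\<lambda>k. C1 * exp (- (d1 * real k))) \<longlonglongrightarrow> 0"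
      using C1 by real_asymp
  qed
  have "(\<lambda>k. integral {0..} (fk k)) \<longlonglongrightarrow> 0 - \<Phi> 0"
    unfolding fk_int by (intro tendsto_diff \<Phi>lim tendsto_const)
  hence "integral {0..} G = - \<Phi> 0" using dc LIMSEQ_unique by fastforce
  also have "- \<Phi> 0 = f 0" by (simp add: \<Phi>_def E_def)
  finally have "integral {0..} G = f 0" .
  moreover have "integral {0..} G = integral {0..} (\<lambda>t. f t * E t * w) - integral {0..} (\<lambda>t. f' t * E t)"
    unfolding G_def by (rule integral_diff[OF I1w I2])
  ultimately show ?thesis by (simp add: E_def) (metis add.commute diff_eq_eq)
qed

lemma good_mono: "good f c \<Longrightarrow> c \<le> c' \<Longrightarrow> good f c'"
  unfolding good_def by (meson less_le_trans)

lemma good_nonneg: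
  assumes "good f c" obtains C a where "C \<ge> 0" "a < c" "\<And>t. t \<ge> 0 \<Longrightarrow> norm (f t) \<le> C * exp (a * t)"
proof -
  obtain C a where a: "a < c" and b: "\<And>t. t\<ge>0 \<Longrightarrow> norm (f t) \<le> C * exp (a * t)"
    using assms unfolding good_def by blast
  have "0 \<le> C" using b[of 0] by (smt (verit) exp_zero mult_cancel_left1 norm_ge_zero)
  thus ?thesis using that a b by blast
qed

lemma good_mult:
  assumes "good f c1" "good g c2" shows "good (\<lambda>t. f t * g t) (c1 + c2)"
proof -
  obtain C1 a1 where 1: "C1 \<ge> 0" "a1 < c1" "\<And>t. t \<ge> 0 \<Longrightarrow> norm (f t) \<le> C1 * exp (a1 * t)"
    using good_nonneg[OF assms(1)] by blast
  obtain C2 a2 where 2: "C2 \<ge> 0" "a2 < c2" "\<And>t. t \<ge> 0 \<Longrightarrow> norm (g t) \<le> C2 * exp (a2 * t)"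
    using good_nonneg[OF assms(2)] by blast
  show ?thesis unfolding good_def
  proof (rule exI[of _ "C1 * C2"], rule exI[of _ "a1 + a2"], intro conjI allI impI)
    show "a1 + a2 < c1 + c2" using 1 2 by simp
    fix t :: real assume t: "t \<ge> 0"
    have "norm (f t * g t) \<le> (C1 * exp (a1 * t)) * (C2 * exp (a2 * t))"
      unfolding norm_mult by (intro mult_mono 1(3)[OF t] 2(3)[OF t]) (use 1 in auto)
    also have "\<dots> = C1 * C2 * exp ((a1 + a2) * t)" by (simp add: exp_add distrib_right)
    finally show "norm (f t * g t) \<le> C1 * C2 * exp ((a1 + a2) * t)" .
  qed
qed

lemma good_add:
  assumes "good f c" "good g c" shows "good (\<lambda>t. f t + g t) c"
proof -
  obtain C1 a1 where 1: "C1 \<ge> 0" "a1 < c" "\<And>t. t \<ge> 0 \<Longrightarrow> norm (f t) \<le> C1 * exp (a1 * t)"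
    using good_nonneg[OF assms(1)] by blast
  obtain C2 a2 where 2: "C2 \<ge> 0" "a2 < c" "\<And>t. t \<ge> 0 \<Longrightarrow> norm (g t) \<le> C2 * exp (a2 * t)"
    using good_nonneg[OF assms(2)] by blast
  show ?thesis unfolding good_def
  proof (rule exI[of _ "C1 + C2"], rule exI[of _ "max a1 a2"], intro conjI allI impI)
    show "max a1 a2 < c" using 1 2 by simp
    fix t :: real assume t: "t \<ge> 0"
    have e1: "exp (a1 * t) \<le> exp (max a1 a2 * t)" "exp (a2 * t) \<le> exp (max a1 a2 * t)"
      using t by (auto intro!: mult_right_mono)
    have "norm (f t + g t) \<le> C1 * exp (a1 * t) + C2 * exp (a2 * t)"
      using norm_triangle_ineq[of "f t" "g t"] 1(3)[OF t] 2(3)[OF t] by linarith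
    also have "\<dots> \<le> C1 * exp (max a1 a2 * t) + C2 * exp (max a1 a2 * t)"
      using e1 1 2 by (intro add_mono mult_left_mono) auto
    finally show "norm (f t + g t) \<le> (C1 + C2) * exp (max a1 a2 * t)" by (simp add: algebra_simps)
  qed
qed

lemma good_cmult: "good f c \<Longrightarrow> good (\<lambda>t. k * f t) c"
proof -
  assume "good f c"
  then obtain C a where 1: "C \<ge> 0" "a < c" "\<And>t. t \<ge> 0 \<Longrightarrow> norm (f t) \<le> C * exp (a * t)"
    using good_nonneg by blast
  show ?thesis unfolding good_def
  proof (rule exI[of _ "norm k * C"], rule exI[of _ "a"], intro conjI allI impI)
    fix t :: real assume t: "t \<ge> 0"
    show "norm (k * f t) \<le> norm k * C * exp (a * t)"
      unfolding norm_mult mult.assoc by (intro mult_left_mono 1(3)[OF t]) auto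
  qed (use 1 in auto)
qed

lemma good_const: "c > 0 \<Longrightarrow> good (\<lambda>t. k) c"
  unfolding good_def by (intro exI[of _ "norm k"] exI[of _ 0]) auto

lemma poly_growth:
  fixes s K \<epsilon> :: real
  assumes s: "s \<ge> 0" and K: "K > 0" and \<epsilon>: "\<epsilon> > 0"
  shows "\<exists>C. \<forall>t\<ge>0. (1 + t / K) powr s \<le> C * exp (\<epsilon> * t)"
proof (cases "s = 0")
  case True
  thus ?thesis using \<epsilon> by (intro exI[of _ 1]) auto
next
  case False
  hence s: "s > 0" using s by simp
  define \<eta> where "\<eta> = \<epsilon> * K / s"
  have \<eta>: "\<eta> > 0" using s K \<epsilon> by (simp add: \<eta>_def)
  show ?thesis
  proof (intro exI[of _ "exp (s * \<eta> - s - s * ln \<eta>)"] allI impI)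
    fix t :: real assume t: "t \<ge> 0"
    have y: "1 + t / K > 0" using t K by (simp add: add_pos_nonneg)
    have "ln (\<eta> * (1 + t / K)) \<le> \<eta> * (1 + t / K) - 1"
      by (rule ln_le_minus_one) (use \<eta> y in simp)
    hence "ln (1 + t / K) \<le> \<eta> * (1 + t / K) - 1 - ln \<eta>"
      using \<eta> y by (simp add: ln_mult)
    hence "s * ln (1 + t / K) \<le> s * (\<eta> * (1 + t / K) - 1 - ln \<eta>)"
      using s by (intro mult_left_mono) auto
    also have "\<dots> = (s * \<eta> - s - s * ln \<eta>) + \<epsilon> * t"
      using s K by (simp add: \<eta>_def field_simps)
    finally have "exp (s * ln (1 + t / K)) \<le> exp ((s * \<eta> - s - s * ln \<eta>) + \<epsilon> * t)" by simp
    thus "(1 + t / K) powr s \<le> exp (s * \<eta> - s - s * ln \<eta>) * exp (\<epsilon> * t)"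
      using y by (simp add: powr_def exp_add mult.commute)
  qed
qed

lemma good_powr_ray:
  fixes u e :: complex and \<theta> c :: real
  assumes u: "u \<noteq> 0" and d: "\<And>k::int. \<theta> \<noteq> Arg (- u) + 2 * pi * of_int k" and c: "c > 0"
  shows "good (\<lambda>t. (1 + of_real t * cis \<theta> / u) powr e) c"
proof -
  obtain \<delta> where \<delta>: "\<delta> > 0" and bd: "\<And>t. t \<ge> 0 \<Longrightarrow> \<delta> \<le> norm (of_real t * cis \<theta> - (- u))"
    using ray_dist[of "- u" \<theta>] u d by auto
  define s where "s = Re e"
  define M where "M = exp (\<bar>Im e\<bar> * pi)"
  have lower: "\<delta> / norm u \<le> norm (1 + of_real t * cis \<theta> / u)" if "t \<ge> 0" for t
  proof -
    have "1 + of_real t * cis \<theta> / u = (of_real t * cis \<theta> - (- u)) / u" using u by (simp add: field_simps)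
    thus ?thesis using bd[OF that] u by (simp add: norm_divide divide_right_mono)
  qed
  have upper: "norm (1 + of_real t * cis \<theta> / u) \<le> 1 + t / norm u" if "t \<ge> 0" for t
  proof -
    have "norm (1 + of_real t * cis \<theta> / u) \<le> norm (1::complex) + norm (of_real t * cis \<theta> / u)"
      by (rule norm_triangle_ineq)
    thus ?thesis using that by (simp add: norm_divide norm_mult)
  qed
  have argb: "exp (- Im e * Arg z) \<le> M" for z
  proof -
    have "- Im e * Arg z \<le> \<bar>Im e\<bar> * pi"
    proof -
      have "\<bar>Arg z\<bar> \<le> pi" using mpi_less_Arg[of z] Arg_le_pi[of z] by auto
      hence "\<bar>Im e * Arg z\<bar> \<le> \<bar>Im e\<bar> * pi" by (simp add: abs_mult mult_left_mono)
      thus ?thesis by linarith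
    qed
    thus ?thesis by (simp add: M_def)
  qed
  show ?thesis
  proof (cases "s \<ge> 0")
    case True
    obtain C where C: "\<And>t. t \<ge> 0 \<Longrightarrow> (1 + t / norm u) powr s \<le> C * exp (c / 2 * t)"
      using poly_growth[OF True _ half_gt_zero[OF c], of "norm u"] u by auto
    show ?thesis unfolding good_def
    proof (rule exI[of _ "C * M"], rule exI[of _ "c / 2"], intro conjI allI impI)
      fix t :: real assume t: "t \<ge> 0"
      have "norm ((1 + of_real t * cis \<theta> / u) powr e)
          = norm (1 + of_real t * cis \<theta> / u) powr s * exp (- Im e * Arg (1 + of_real t * cis \<theta> / u))"
        by (simp add: norm_powr_complex s_def)
      also have "\<dots> \<le> (1 + t / norm u) powr s * M"
        by (intro mult_mono powr_mono2 True upper t argb) auto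
      also have "\<dots> \<le> C * exp (c / 2 * t) * M"
        using C[OF t] by (intro mult_right_mono) (auto simp: M_def)
      finally show "norm ((1 + of_real t * cis \<theta> / u) powr e) \<le> C * M * exp (c / 2 * t)"
        by (simp add: algebra_simps)
    qed (use c in auto)
  next
    case False
    show ?thesis unfolding good_def
    proof (rule exI[of _ "(\<delta> / norm u) powr s * M"], rule exI[of _ "0"], intro conjI allI impI)
      fix t :: real assume t: "t \<ge> 0"
      have "norm ((1 + of_real t * cis \<theta> / u) powr e)
          = norm (1 + of_real t * cis \<theta> / u) powr s * exp (- Im e * Arg (1 + of_real t * cis \<theta> / u))"
        by (simp add: norm_powr_complex s_def)
      also have "\<dots> \<le> (\<delta> / norm u) powr s * M"
        using False \<delta> u by (intro mult_mono powr_mono2' lower t argb) auto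
      finally show "norm ((1 + of_real t * cis \<theta> / u) powr e) \<le> (\<delta> / norm u) powr s * M * exp (0 * t)"
        by simp
    qed (use c in auto)
  qed
qed

lemma good_inverse_ray:
  fixes u :: complex and \<theta> c :: real
  assumes u: "u \<noteq> 0" and d: "\<And>k::int. \<theta> \<noteq> Arg (- u) + 2 * pi * of_int k" and c: "c > 0"
  shows "good (\<lambda>t. inverse (1 + of_real t * cis \<theta> / u)) c"
proof -
  obtain \<delta> where \<delta>: "\<delta> > 0" and bd: "\<And>t. t \<ge> 0 \<Longrightarrow> \<delta> \<le> norm (of_real t * cis \<theta> - (- u))"
    using ray_dist[of "- u" \<theta>] u d by auto
  show ?thesis unfolding good_def
  proof (rule exI[of _ "norm u / \<delta>"], rule exI[of _ "0"], intro conjI allI impI)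
    fix t :: real assume t: "t \<ge> 0"
    have "1 + of_real t * cis \<theta> / u = (of_real t * cis \<theta> - (- u)) / u" using u by (simp add: field_simps)
    hence "norm (inverse (1 + of_real t * cis \<theta> / u)) = norm u / norm (of_real t * cis \<theta> - (- u))"
      by (simp add: norm_divide)
    also have "\<dots> \<le> norm u / \<delta>"
      using bd[OF t] \<delta> by (intro divide_left_mono) (auto intro!: mult_pos_pos)
    finally show "norm (inverse (1 + of_real t * cis \<theta> / u)) \<le> norm u / \<delta> * exp (0 * t)" by simp
  qed (use c in auto)
qed

lemma good_cong: "good f c \<Longrightarrow> (\<And>t. t \<ge> 0 \<Longrightarrow> f t = g t) \<Longrightarrow> good g c"
  unfolding good_def by (metis)

lemma slit_avoid:
  fixes u :: complex
  assumes u: "u \<noteq> 0" and d: "\<And>k::int. \<theta> \<noteq> Arg (- u) + 2 * pi * of_int k" and t: "t \<ge> 0"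
  shows "1 + of_real t * cis \<theta> / u \<notin> \<real>\<^sub>\<le>\<^sub>0"
proof
  assume "1 + of_real t * cis \<theta> / u \<in> \<real>\<^sub>\<le>\<^sub>0"
  then obtain y where y: "y \<le> 0" "1 + of_real t * cis \<theta> / u = of_real y"
    by (auto simp: complex_nonpos_Reals_iff complex_eq_iff intro: exI[of _ "Re (1 + of_real t * cis \<theta> / u)"])
  obtain \<delta> where \<delta>: "\<delta> > 0" and bd: "\<And>t. t \<ge> 0 \<Longrightarrow> \<delta> \<le> norm (of_real t * cis \<theta> - (- u))"
    using ray_dist[of "- u" \<theta>] u d by auto
  have "of_real t * cis \<theta> = of_real (1 - y) * (- u)"
    using y(2) u by (simp add: field_simps)
  hence "of_real (t / (1 - y)) * cis \<theta> = - u" using y(1) by (simp add: field_simps)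
  moreover have "t / (1 - y) \<ge> 0" using t y by simp
  ultimately have "\<delta> \<le> 0" using bd[of "t / (1 - y)"] by simp
  thus False using \<delta> by simp
qed

lemma domain_exists:
  fixes S :: "complex set" and p q :: complex
  assumes S: "open S" "0 \<in> S" and ray: "\<And>t. t \<ge> 0 \<Longrightarrow> of_real t * cis \<theta> \<in> S"
    and p: "p \<noteq> 0" and q: "q \<noteq> 0"
    and dp: "\<And>k::int. \<theta> \<noteq> Arg (- p) + 2 * pi * of_int k"
    and dq: "\<And>k::int. \<theta> \<noteq> Arg (- q) + 2 * pi * of_int k"
  obtains D where "open D" "connected D" "D \<subseteq> S" "0 \<in> D" "\<And>t. t \<ge> 0 \<Longrightarrow> of_real t * cis \<theta> \<in> D"
    "\<And>z. z \<in> D \<Longrightarrow> 1 + z / p \<notin> \<real>\<^sub>\<le>\<^sub>0" "\<And>z. z \<in> D \<Longrightarrow> 1 + z / q \<notin> \<real>\<^sub>\<le>\<^sub>0"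
proof -
  define Z where "Z = ((\<lambda>z. 1 + z / p) -` \<real>\<^sub>\<le>\<^sub>0) \<union> ((\<lambda>z. 1 + z / q) -` \<real>\<^sub>\<le>\<^sub>0)"
  have cZ: "closed Z" unfolding Z_def
    by (intro closed_Un continuous_closed_vimage closed_nonpos_Reals_complex) (use p q in \<open>auto intro!: continuous_intros\<close>)
  define D0 where "D0 = S - Z"
  have oD0: "open D0" unfolding D0_def using S(1) cZ by (rule open_Diff)
  define D where "D = connected_component_set D0 0"
  define R where "R = (\<lambda>t::real. of_real t * cis \<theta>) ` {0..}"
  have RD0: "R \<subseteq> D0"
    using ray slit_avoid[OF p dp] slit_avoid[OF q dq] by (auto simp: R_def D0_def Z_def)
  have cR: "connected R" unfolding R_def
    by (intro connected_continuous_image continuous_intros) (auto simp: is_interval_connected_1 is_interval_ci)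
  have 0: "0 \<in> R" unfolding R_def by (auto intro!: image_eqI[of _ _ 0])
  have RD: "R \<subseteq> D" unfolding D_def by (rule connected_component_maximal[OF 0 cR RD0])
  show ?thesis
  proof (rule that[of D])
    show "open D" unfolding D_def by (rule open_connected_component[OF oD0])
    show "connected D" unfolding D_def by (rule connected_connected_component)
    show "D \<subseteq> S" unfolding D_def D0_def using connected_component_subset by blast
    show "0 \<in> D" using RD 0 by blast
    show "of_real t * cis \<theta> \<in> D" if "t \<ge> 0" for t using RD that by (auto simp: R_def)
    show "1 + z / p \<notin> \<real>\<^sub>\<le>\<^sub>0" if "z \<in> D" for z
      using that connected_component_subset[of D0 0] unfolding D_def D0_def Z_def by blast
    show "1 + z / q \<notin> \<real>\<^sub>\<le>\<^sub>0" if "z \<in> D" for z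
      using that connected_component_subset[of D0 0] unfolding D_def D0_def Z_def by blast
  qed
qed

lemma omega_rec:
  fixes A B p q :: complex and b c \<omega> :: "nat \<Rightarrow> complex"
  assumes p: "p \<noteq> 0" and q: "q \<noteq> 0"
    and b_def: "\<And>n. b n = (-1) ^ n * pochhammer B n / q ^ n"
    and c_def: "\<And>n. c n = (-1) ^ n * pochhammer A n / p ^ n"
    and \<omega>_def: "\<And>n. \<omega> n = (\<Sum>k\<le>n. c k * b (n - k))"
  shows "(p + q) * \<omega> (Suc n) + (A + B + of_nat n) * \<omega> n = q * c (Suc n) + p * b (Suc n)"
proof -
  have cS: "p * c (Suc k) = - (A + of_nat k) * c k" for k
    using p by (simp add: c_def pochhammer_rec' field_simps)
  have bS: "q * b (Suc k) = - (B + of_nat k) * b k" for k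
    using q by (simp add: b_def pochhammer_rec' field_simps)
  have c0: "c 0 = 1" and b0: "b 0 = 1" by (simp_all add: c_def b_def)
  have P: "p * \<omega> (Suc n) = p * b (Suc n) - (\<Sum>k\<le>n. (A + of_nat k) * c k * b (n - k))"
  proof -
    have "\<omega> (Suc n) = c 0 * b (Suc n - 0) + (\<Sum>k\<le>n. c (Suc k) * b (Suc n - Suc k))"
      unfolding \<omega>_def by (rule sum.atMost_Suc_shift)
    hence "p * \<omega> (Suc n) = p * (c 0 * b (Suc n) + (\<Sum>k\<le>n. c (Suc k) * b (Suc n - Suc k)))"
      by simp
    also have "\<dots> = p * b (Suc n) + (\<Sum>k\<le>n. (p * c (Suc k)) * b (n - k))"
      by (simp add: c0 algebra_simps sum_distrib_left)
    also have "\<dots> = p * b (Suc n) - (\<Sum>k\<le>n. (A + of_nat k) * c k * b (n - k))"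
    proof -
      have "(\<Sum>k\<le>n. (p * c (Suc k)) * b (n - k)) = (\<Sum>k\<le>n. - ((A + of_nat k) * c k * b (n - k)))"
        by (intro sum.cong refl) (simp add: cS algebra_simps)
      thus ?thesis by (simp add: sum_negf)
    qed
    finally show ?thesis .
  qed
  have Q: "q * \<omega> (Suc n) = q * c (Suc n) - (\<Sum>k\<le>n. (B + of_nat (n - k)) * c k * b (n - k))"
  proof -
    have "q * \<omega> (Suc n) = q * ((\<Sum>k\<le>n. c k * b (Suc n - k)) + c (Suc n) * b 0)"
      by (simp add: \<omega>_def)
    also have "(\<Sum>k\<le>n. c k * b (Suc n - k)) = (\<Sum>k\<le>n. c k * b (Suc (n - k)))"
      by (intro sum.cong refl) (simp add: Suc_diff_le)
    also have "q * (\<dots> + c (Suc n) * b 0) = q * c (Suc n) + (\<Sum>k\<le>n. c k * (q * b (Suc (n - k))))"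
      by (simp add: b0 algebra_simps sum_distrib_left)
    also have "\<dots> = q * c (Suc n) - (\<Sum>k\<le>n. (B + of_nat (n - k)) * c k * b (n - k))"
    proof -
      have bS': "c k * (q * b (Suc j)) = - ((B + of_nat j) * c k * b j)" for k j
      proof -
        have "c k * (q * b (Suc j)) = c k * (- (B + of_nat j) * b j)" by (simp only: bS)
        also have "\<dots> = - ((B + of_nat j) * c k * b j)" by (simp add: algebra_simps)
        finally show ?thesis .
      qed
      have "(\<Sum>k\<le>n. c k * (q * b (Suc (n - k)))) = (\<Sum>k\<le>n. - ((B + of_nat (n - k)) * c k * b (n - k)))"
        by (simp only: bS')
      thus ?thesis using sum_negf[of "\<lambda>k. (B + of_nat (n - k)) * c k * b (n - k)" "{..n}"] by simp
    qed
    finally show ?thesis .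
  qed
  have S: "(\<Sum>k\<le>n. (A + of_nat k) * c k * b (n - k)) + (\<Sum>k\<le>n. (B + of_nat (n - k)) * c k * b (n - k))
        = (A + B + of_nat n) * \<omega> n"
  proof -
    have "(\<Sum>k\<le>n. (A + of_nat k) * c k * b (n - k)) + (\<Sum>k\<le>n. (B + of_nat (n - k)) * c k * b (n - k))
        = (\<Sum>k\<le>n. (A + B + of_nat n) * (c k * b (n - k)))"
      unfolding sum.distrib[symmetric]
    proof (intro sum.cong refl)
      fix k assume "k \<in> {..n}"
      hence "of_nat k + of_nat (n - k) = (of_nat n :: complex)" by (simp add: of_nat_diff)
      hence e: "A + B + of_nat n = (A + of_nat k) + (B + of_nat (n - k))"
        by (simp add: ac_simps)
      show "(A + of_nat k) * c k * b (n - k) + (B + of_nat (n - k)) * c k * b (n - k)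
          = (A + B + of_nat n) * (c k * b (n - k))"
        unfolding e by (simp only: distrib_right mult.assoc)
    qed
    also have "\<dots> = (A + B + of_nat n) * \<omega> n" by (simp add: \<omega>_def sum_distrib_left)
    finally show ?thesis .
  qed
  define X1 where "X1 = (\<Sum>k\<le>n. (A + of_nat k) * c k * b (n - k))"
  define X2 where "X2 = (\<Sum>k\<le>n. (B + of_nat (n - k)) * c k * b (n - k))"
  have P': "p * \<omega> (Suc n) = p * b (Suc n) - X1" using P by (simp only: X1_def)
  have Q': "q * \<omega> (Suc n) = q * c (Suc n) - X2" using Q by (simp only: X2_def)
  have S': "X1 + X2 = (A + B + of_nat n) * \<omega> n" using S by (simp only: X1_def X2_def)
  have "(p + q) * \<omega> (Suc n) + (A + B + of_nat n) * \<omega> n = p * \<omega> (Suc n) + q * \<omega> (Suc n) + (X1 + X2)"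
    by (simp only: S' distrib_right)
  also have "\<dots> = (p * b (Suc n) - X1) + (q * c (Suc n) - X2) + (X1 + X2)" by (simp only: P' Q')
  also have "\<dots> = q * c (Suc n) + p * b (Suc n)" by (simp add: algebra_simps)
  finally show ?thesis .
qed

lemma omega_closed:
  fixes \<sigma> r :: complex and d \<omega> :: "nat \<Rightarrow> complex"
  assumes r: "r \<noteq> 0" and w0: "r * \<omega> 0 = d 0"
    and rec: "\<And>n. r * \<omega> (Suc n) + (\<sigma> + of_nat n) * \<omega> n = d (Suc n)"
  shows "r * \<omega> m = (\<Sum>l\<le>m. d l * ((-1) ^ (m - l) * pochhammer (\<sigma> + of_nat l) (m - l) / r ^ (m - l)))"
proof (induction m)
  case 0
  then show ?case using w0 by simp
next
  case (Suc m)
  have e1: "r * \<omega> (Suc m) = d (Suc m) - (\<sigma> + of_nat m) * \<omega> m"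
    using rec[of m] by (simp add: algebra_simps)
  have e2: "(\<sigma> + of_nat m) * \<omega> m = (\<sigma> + of_nat m) / r * (r * \<omega> m)" using r by simp
  have "r * \<omega> (Suc m) = d (Suc m) - (\<sigma> + of_nat m) / r * (r * \<omega> m)"
    using e1 e2 by simp
  also have "\<dots> = d (Suc m) + (\<Sum>l\<le>m. d l * ((-1) ^ (Suc m - l) * pochhammer (\<sigma> + of_nat l) (Suc m - l) / r ^ (Suc m - l)))"
  proof -
    have "- ((\<sigma> + of_nat m) / r) * (r * \<omega> m) = (\<Sum>l\<le>m. d l * ((-1) ^ (Suc m - l) * pochhammer (\<sigma> + of_nat l) (Suc m - l) / r ^ (Suc m - l)))"
      unfolding Suc.IH sum_distrib_left
    proof (intro sum.cong refl)
      fix l assume "l \<in> {..m}"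
      hence l: "l \<le> m" by simp
      have e: "Suc m - l = Suc (m - l)" using l by (simp add: Suc_diff_le)
      have "\<sigma> + of_nat l + of_nat (m - l) = \<sigma> + (of_nat m :: complex)" using l by (simp add: of_nat_diff)
      thus "- ((\<sigma> + of_nat m) / r) * (d l * ((-1) ^ (m - l) * pochhammer (\<sigma> + of_nat l) (m - l) / r ^ (m - l)))
         = d l * ((-1) ^ (Suc m - l) * pochhammer (\<sigma> + of_nat l) (Suc m - l) / r ^ (Suc m - l))"
        unfolding e using r by (simp add: pochhammer_rec' field_simps)
    qed
    thus ?thesis by (simp add: diff_conv_add_uminus)
  qed
  also have "\<dots> = (\<Sum>l\<le>Suc m. d l * ((-1) ^ (Suc m - l) * pochhammer (\<sigma> + of_nat l) (Suc m - l) / r ^ (Suc m - l)))"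
    by (simp add: add.commute)
  finally show ?case .
qed

lemma triangle_sum:
  fixes F :: "nat \<Rightarrow> nat \<Rightarrow> 'a::comm_monoid_add"
  shows "(\<Sum>l\<le>M. \<Sum>s\<le>M - l. F l s) = (\<Sum>m\<le>M. \<Sum>l\<le>m. F l (m - l))"
proof (induction M)
  case 0 then show ?case by simp
next
  case (Suc M)
  have "(\<Sum>l\<le>Suc M. \<Sum>s\<le>Suc M - l. F l s) = (\<Sum>l\<le>M. \<Sum>s\<le>Suc M - l. F l s) + F (Suc M) 0"
    by simp
  also have "(\<Sum>l\<le>M. \<Sum>s\<le>Suc M - l. F l s) = (\<Sum>l\<le>M. (\<Sum>s\<le>M - l. F l s) + F l (Suc M - l))"
    by (intro sum.cong refl) (simp add: Suc_diff_le)
  also have "\<dots> = (\<Sum>l\<le>M. \<Sum>s\<le>M - l. F l s) + (\<Sum>l\<le>M. F l (Suc M - l))"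
    by (simp add: sum.distrib)
  finally show ?case using Suc.IH by (simp add: add.assoc)
qed

lemma poly_part:
  fixes r \<sigma> x :: complex and d \<omega> :: "nat \<Rightarrow> complex" and K :: nat
  assumes r: "r \<noteq> 0" and w0: "r * \<omega> 0 = d 0"
    and rec: "\<And>n. r * \<omega> (Suc n) + (\<sigma> + of_nat n) * \<omega> n = d (Suc n)"
  shows "r * (\<Sum>k<Suc K. \<omega> k * x ^ k) =
    (\<Sum>l=0..K. d l * x ^ l * (\<Sum>s=0..K-l. (-1) ^ s * pochhammer (\<sigma> + of_nat l) s / r ^ s * x ^ s))"
proof -
  define F where "F = (\<lambda>l s. d l * ((-1) ^ s * pochhammer (\<sigma> + of_nat l) s / r ^ s) * x ^ (l + s))"
  have "r * (\<Sum>k<Suc K. \<omega> k * x ^ k) = (\<Sum>k\<le>K. (r * \<omega> k) * x ^ k)"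
    by (simp add: sum_distrib_left lessThan_Suc_atMost mult.assoc)
  also have "\<dots> = (\<Sum>m\<le>K. \<Sum>l\<le>m. F l (m - l))"
  proof (intro sum.cong refl)
    fix m assume "m \<in> {..K}"
    have "(r * \<omega> m) * x ^ m = (\<Sum>l\<le>m. d l * ((-1) ^ (m - l) * pochhammer (\<sigma> + of_nat l) (m - l) / r ^ (m - l))) * x ^ m"
      by (simp only: omega_closed[OF r w0 rec])
    also have "\<dots> = (\<Sum>l\<le>m. F l (m - l))"
      unfolding sum_distrib_right F_def by (intro sum.cong refl) simp
    finally show "(r * \<omega> m) * x ^ m = (\<Sum>l\<le>m. F l (m - l))" .
  qed
  also have "\<dots> = (\<Sum>l\<le>K. \<Sum>s\<le>K - l. F l s)" by (rule triangle_sum[symmetric])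
  also have "\<dots> = (\<Sum>l=0..K. d l * x ^ l * (\<Sum>s=0..K-l. (-1) ^ s * pochhammer (\<sigma> + of_nat l) s / r ^ s * x ^ s))"
    unfolding atLeast0AtMost sum_distrib_left F_def
    by (intro sum.cong refl) (simp add: power_add mult_ac)
  finally show ?thesis .
qed

lemma sums_has_fps_expansion:
  fixes f :: "complex \<Rightarrow> complex"
  assumes \<rho>: "\<rho> > 0" and s: "\<And>z. z \<in> ball 0 \<rho> \<Longrightarrow> (\<lambda>n. a n * z ^ n) sums f z"
  shows "f has_fps_expansion Abs_fps a"
  unfolding has_fps_expansion_def
proof
  have "(\<lambda>n. a n * (of_real (\<rho>/2)) ^ n) sums f (of_real (\<rho>/2))"
    using \<rho> by (intro s) auto
  hence "ereal (norm (of_real (\<rho>/2) :: complex)) \<le> conv_radius a"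
    by (intro conv_radius_geI) (auto simp: sums_iff)
  thus "0 < fps_conv_radius (Abs_fps a)"
    using \<rho> by (simp add: fps_conv_radius_def) (meson ereal_less(2) half_gt_zero less_le_trans)
  have "eventually (\<lambda>z. z \<in> ball 0 \<rho>) (nhds (0::complex))"
    using \<rho> by (intro eventually_nhds_in_open) auto
  thus "eventually (\<lambda>z. eval_fps (Abs_fps a) z = f z) (nhds 0)"
  proof eventually_elim
    case (elim z)
    show ?case using s[OF elim] by (simp add: eval_fps_def sums_iff)
  qed
qed

lemma binomial_has_fps_expansion:
  fixes p e :: complex
  assumes p: "p \<noteq> 0"
  shows "(\<lambda>z. (1 + z / p) powr e) has_fps_expansion Abs_fps (\<lambda>n. (e gchoose n) / p ^ n)"
proof (rule sums_has_fps_expansion)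
  show "norm p > 0" using p by simp
  fix z :: complex assume z: "z \<in> ball 0 (norm p)"
  have "norm (z / p) < 1" using p z by (simp add: norm_divide divide_less_eq)
  from gen_binomial_complex[OF this, of e]
  show "(\<lambda>n. (e gchoose n) / p ^ n * z ^ n) sums (1 + z / p) powr e"
    by (simp add: power_divide)
qed

lemma deriv_powr_lin:
  fixes p e z :: complex
  assumes p: "p \<noteq> 0" and nz: "1 + z / p \<notin> \<real>\<^sub>\<le>\<^sub>0"
  shows "((\<lambda>z. (1 + z / p) powr e) has_field_derivative (e / p * (1 + z / p) powr (e - 1))) (at z)"
proof -
  have "((\<lambda>w. w powr e) has_field_derivative (e * (1 + z/p) powr (e - 1))) (at (1 + z/p))"
    by (rule has_field_derivative_powr[OF nz])
  moreover have "((\<lambda>z. 1 + z / p) has_field_derivative (1 / p)) (at z)"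
    using p by (auto intro!: derivative_eq_intros)
  ultimately have "((\<lambda>z. (1 + z / p) powr e) has_field_derivative (e * (1 + z/p) powr (e - 1) * (1 / p))) (at z)"
    by (rule DERIV_chain2)
  thus ?thesis by (simp add: field_simps)
qed

lemma higher_deriv_ode:
  fixes h :: "complex \<Rightarrow> complex" and A B p q r \<sigma> :: complex and b c :: "nat \<Rightarrow> complex"
  assumes D: "open D" and hol: "h holomorphic_on D" and p: "p \<noteq> 0" and q: "q \<noteq> 0"
    and Dp: "\<And>z. z \<in> D \<Longrightarrow> 1 + z / p \<notin> \<real>\<^sub>\<le>\<^sub>0"
    and Dq: "\<And>z. z \<in> D \<Longrightarrow> 1 + z / q \<notin> \<real>\<^sub>\<le>\<^sub>0"
    and cS: "\<And>k. p * c (Suc k) = - (A + of_nat k) * c k"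
    and bS: "\<And>k. q * b (Suc k) = - (B + of_nat k) * b k"
    and base: "\<And>z. z \<in> D \<Longrightarrow> (r + z) * deriv h z + \<sigma> * h z
                 = q * c 1 * (1 + z / p) powr (- A - 1) + p * b 1 * (1 + z / q) powr (- B - 1)"
  shows "z \<in> D \<Longrightarrow> (r + z) * (deriv ^^ Suc m) h z + (\<sigma> + of_nat m) * (deriv ^^ m) h z
          = q * c (Suc m) * (1 + z / p) powr (- A - of_nat (Suc m))
            + p * b (Suc m) * (1 + z / q) powr (- B - of_nat (Suc m))"
proof (induction m arbitrary: z)
  case 0
  then show ?case using base[OF 0] by simp
next
  case (Suc m)
  define L where "L = (\<lambda>z. (r + z) * (deriv ^^ Suc m) h z + (\<sigma> + of_nat m) * (deriv ^^ m) h z)"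
  define R where "R = (\<lambda>z. q * c (Suc m) * (1 + z / p) powr (- A - of_nat (Suc m))
            + p * b (Suc m) * (1 + z / q) powr (- B - of_nat (Suc m)))"
  have LR: "\<And>w. w \<in> D \<Longrightarrow> L w = R w" using Suc.IH by (simp add: L_def R_def)
  have d1: "((deriv ^^ k) h has_field_derivative (deriv ^^ Suc k) h z) (at z)" for k
    by (rule has_field_derivative_higher_deriv[OF hol D Suc.prems])
  have dL: "(L has_field_derivative ((r + z) * (deriv ^^ Suc (Suc m)) h z + (\<sigma> + of_nat (Suc m)) * (deriv ^^ Suc m) h z)) (at z)"
  proof -
    have "(L has_field_derivative (1 * (deriv ^^ Suc m) h z + (r + z) * (deriv ^^ Suc (Suc m)) h z
              + (\<sigma> + of_nat m) * (deriv ^^ Suc m) h z)) (at z)"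
      unfolding L_def
      by (rule derivative_eq_intros d1 refl | simp)+
    thus ?thesis by (simp add: algebra_simps)
  qed
  have dR: "(R has_field_derivative (q * c (Suc (Suc m)) * (1 + z / p) powr (- A - of_nat (Suc (Suc m)))
            + p * b (Suc (Suc m)) * (1 + z / q) powr (- B - of_nat (Suc (Suc m))))) (at z)"
  proof -
    have dR0: "(R has_field_derivative (q * c (Suc m) * ((- A - of_nat (Suc m)) / p * (1 + z / p) powr (- A - of_nat (Suc m) - 1))
            + p * b (Suc m) * ((- B - of_nat (Suc m)) / q * (1 + z / q) powr (- B - of_nat (Suc m) - 1)))) (at z)"
      unfolding R_def
      by (intro DERIV_add DERIV_cmult deriv_powr_lin p q Dp Dq Suc.prems)
    have f1: "c (Suc m) * ((- A - of_nat (Suc m)) / p) = c (Suc (Suc m))"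
      using cS[of "Suc m"] p by (simp add: field_simps)
    have f2: "b (Suc m) * ((- B - of_nat (Suc m)) / q) = b (Suc (Suc m))"
      using bS[of "Suc m"] q by (simp add: field_simps)
    have f3: "- A - of_nat (Suc m) - 1 = - A - of_nat (Suc (Suc m))"
      "- B - of_nat (Suc m) - 1 = - B - of_nat (Suc (Suc m))" by simp_all
    have "q * c (Suc m) * ((- A - of_nat (Suc m)) / p * (1 + z / p) powr (- A - of_nat (Suc m) - 1))
            + p * b (Suc m) * ((- B - of_nat (Suc m)) / q * (1 + z / q) powr (- B - of_nat (Suc m) - 1))
          = q * (c (Suc m) * ((- A - of_nat (Suc m)) / p)) * (1 + z / p) powr (- A - of_nat (Suc m) - 1)
            + p * (b (Suc m) * ((- B - of_nat (Suc m)) / q)) * (1 + z / q) powr (- B - of_nat (Suc m) - 1)"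
      by (simp only: mult.assoc)
    also have "\<dots> = q * c (Suc (Suc m)) * (1 + z / p) powr (- A - of_nat (Suc (Suc m)))
            + p * b (Suc (Suc m)) * (1 + z / q) powr (- B - of_nat (Suc (Suc m)))"
      by (simp only: f1 f2 f3)
    finally show ?thesis using dR0 by (simp only:)
  qed
  have "(R has_field_derivative ((r + z) * (deriv ^^ Suc (Suc m)) h z + (\<sigma> + of_nat (Suc m)) * (deriv ^^ Suc m) h z)) (at z)"
    by (rule has_field_derivative_transform_within_open[OF dL D Suc.prems LR])
  from DERIV_unique[OF this dR] show ?case .
qed

lemma coeff_binom:
  fixes A p :: complex and c :: "nat \<Rightarrow> complex"
  assumes p: "p \<noteq> 0" and c_def: "\<And>n. c n = (-1) ^ n * pochhammer A n / p ^ n"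
  shows "c 1 * (((- A - 1) gchoose n) / p ^ n) = c (Suc n) / fact n"
proof -
  have g: "(- A - 1) gchoose n = (-1) ^ n * pochhammer (1 + A) n / fact n"
    by (simp add: gbinomial_pochhammer)
  have pc: "pochhammer A (Suc n) = A * pochhammer (1 + A) n"
    by (subst pochhammer_rec) (simp only: add.commute)
  have c1: "c 1 = - A / p" by (simp add: c_def)
  have cS: "c (Suc n) = (-1) ^ Suc n * (A * pochhammer (1 + A) n) / p ^ Suc n"
    by (simp only: c_def pc)
  show ?thesis using p unfolding g c1 cS by (simp add: field_simps)
qed

lemma ode_near0:
  fixes h :: "complex \<Rightarrow> complex" and A B p q r \<sigma> :: complex and b c \<omega> :: "nat \<Rightarrow> complex"
  assumes p: "p \<noteq> 0" and q: "q \<noteq> 0"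
    and hH: "h has_fps_expansion Abs_fps (\<lambda>n. \<omega> n / fact n)"
    and c_def: "\<And>n. c n = (-1) ^ n * pochhammer A n / p ^ n"
    and b_def: "\<And>n. b n = (-1) ^ n * pochhammer B n / q ^ n"
    and rec: "\<And>n. r * \<omega> (Suc n) + (\<sigma> + of_nat n) * \<omega> n = q * c (Suc n) + p * b (Suc n)"
  shows "eventually (\<lambda>z. (r + z) * deriv h z + \<sigma> * h z
            - (q * c 1 * (1 + z / p) powr (- A - 1) + p * b 1 * (1 + z / q) powr (- B - 1)) = 0) (nhds 0)"
proof -
  define H where "H = Abs_fps (\<lambda>n. \<omega> n / fact n)"
  define FP where "FP = Abs_fps (\<lambda>n. ((- A - 1) gchoose n) / p ^ n)"
  define GP where "GP = Abs_fps (\<lambda>n. ((- B - 1) gchoose n) / q ^ n)"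
  have F: "(\<lambda>z. (1 + z / p) powr (- A - 1)) has_fps_expansion FP"
    unfolding FP_def by (rule binomial_has_fps_expansion[OF p])
  have G: "(\<lambda>z. (1 + z / q) powr (- B - 1)) has_fps_expansion GP"
    unfolding GP_def by (rule binomial_has_fps_expansion[OF q])
  have hH': "h has_fps_expansion H" using hH by (simp add: H_def)
  have X: "(\<lambda>z. (r + z) * deriv h z + \<sigma> * h z
            - (q * c 1 * (1 + z / p) powr (- A - 1) + p * b 1 * (1 + z / q) powr (- B - 1)))
        has_fps_expansion ((fps_const r + fps_X) * fps_deriv H + fps_const \<sigma> * H
            - (fps_const (q * c 1) * FP + fps_const (p * b 1) * GP))"
    by (intro fps_expansion_intros hH' F G)
  have Z: "(fps_const r + fps_X) * fps_deriv H + fps_const \<sigma> * H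
            - (fps_const (q * c 1) * FP + fps_const (p * b 1) * GP) = 0"
  proof (rule fps_ext)
    fix n :: nat
    have cF: "q * c 1 * (((- A - 1) gchoose n) / p ^ n) = q * (c (Suc n) / fact n)"
      by (simp only: mult.assoc coeff_binom[OF p c_def])
    have bG: "p * b 1 * (((- B - 1) gchoose n) / q ^ n) = p * (b (Suc n) / fact n)"
      by (simp only: mult.assoc coeff_binom[OF q b_def])
    have d1: "of_nat (n + 1) * (\<omega> (n + 1) / fact (n + 1)) = \<omega> (Suc n) / (fact n :: complex)"
    proof -
      have "of_nat (n + 1) * (\<omega> (n + 1) / fact (n + 1)) = of_nat (Suc n) * \<omega> (Suc n) / (of_nat (Suc n) * (fact n :: complex))"
        by (simp only: Suc_eq_plus1[symmetric] fact_Suc) simp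
      also have "\<dots> = \<omega> (Suc n) / fact n"
        by (rule mult_divide_mult_cancel_left) (simp del: of_nat_Suc)
      finally show ?thesis .
    qed
    have d2: "(if n = 0 then 0 else of_nat (n - 1 + 1) * (\<omega> (n - 1 + 1) / fact (n - 1 + 1))) = of_nat n * \<omega> n / (fact n :: complex)"
      by (cases n) (simp_all add: field_simps)
    have "((fps_const r + fps_X) * fps_deriv H + fps_const \<sigma> * H
            - (fps_const (q * c 1) * FP + fps_const (p * b 1) * GP)) $ n
        = r * (of_nat (n + 1) * (\<omega> (n + 1) / fact (n + 1)))
          + (if n = 0 then 0 else of_nat (n - 1 + 1) * (\<omega> (n - 1 + 1) / fact (n - 1 + 1)))
          + \<sigma> * (\<omega> n / fact n)
          - (q * c 1 * (((- A - 1) gchoose n) / p ^ n) + p * b 1 * (((- B - 1) gchoose n) / q ^ n))"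
      by (simp add: H_def FP_def GP_def distrib_right del: of_nat_Suc)
    also have "\<dots> = (r * \<omega> (Suc n) + (\<sigma> + of_nat n) * \<omega> n - (q * c (Suc n) + p * b (Suc n))) / fact n"
      unfolding d1 d2 cF bG by (simp add: field_simps)
    also have "\<dots> = 0" using rec[of n] by simp
    finally show "((fps_const r + fps_X) * fps_deriv H + fps_const \<sigma> * H
            - (fps_const (q * c 1) * FP + fps_const (p * b 1) * GP)) $ n = 0 $ n" by simp
  qed
  from X[unfolded Z] show ?thesis by (simp add: has_fps_expansion_0_iff)
qed

lemma cont_powr_ray:
  fixes u e :: complex
  assumes u: "u \<noteq> 0" and d: "\<And>k::int. \<theta> \<noteq> Arg (- u) + 2 * pi * of_int k"
  shows "continuous_on {0..} (\<lambda>t::real. (1 + of_real t * cis \<theta> / u) powr e)"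
proof (rule continuous_on_powr_complex)
  show "{0..} \<subseteq> {t. 0 \<le> Re (1 + of_real t * cis \<theta> / u) \<or> Im (1 + of_real t * cis \<theta> / u) \<noteq> 0}"
  proof
    fix t :: real assume "t \<in> {0..}"
    hence "1 + of_real t * cis \<theta> / u \<notin> \<real>\<^sub>\<le>\<^sub>0" using slit_avoid[OF u d] by simp
    thus "t \<in> {t. 0 \<le> Re (1 + of_real t * cis \<theta> / u) \<or> Im (1 + of_real t * cis \<theta> / u) \<noteq> 0}"
      by (auto simp: complex_nonpos_Reals_iff)
  qed
  show "0 < Re e" if "t \<in> {0..}" "1 + of_real t * cis \<theta> / u = 0" for t
    using slit_avoid[OF u d, of t] that by simp
qed (use u in \<open>auto intro!: continuous_intros\<close>)

lemma cont_inv_ray: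
  fixes u :: complex
  assumes u: "u \<noteq> 0" and d: "\<And>k::int. \<theta> \<noteq> Arg (- u) + 2 * pi * of_int k"
  shows "continuous_on {0..} (\<lambda>t::real. inverse (1 + of_real t * cis \<theta> / u))"
proof (rule continuous_on_inverse)
  show "continuous_on {0..} (\<lambda>t::real. 1 + of_real t * cis \<theta> / u)" using u by (intro continuous_intros) auto
  show "\<forall>t\<in>{0..}. 1 + of_real t * cis \<theta> / u \<noteq> 0" using slit_avoid[OF u d] by fastforce
qed

theorem mainTheorem11:
  fixes \<alpha>1 \<alpha>2 \<alpha>3 \<beta>1 \<beta>2 \<beta>3 :: complex
    and N :: nat and \<theta> K :: real
    and b c \<omega> :: "nat \<Rightarrow> complex" and h :: "complex \<Rightarrow> complex" and x :: complex
  assumes dist: "\<beta>1 \<noteq> \<beta>2" "\<beta>1 \<noteq> \<beta>3" "\<beta>2 \<noteq> \<beta>3"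
    and near: "norm (\<beta>3 - \<beta>1) < norm (\<beta>3 - \<beta>2)" "norm (\<beta>3 - \<beta>1) < norm (\<beta>2 - \<beta>1)"
    and N: "\<alpha>1 - \<alpha>3 = of_nat N" "N \<ge> 4"
    and a21: "\<not> (\<exists>k::nat. k \<ge> 2 \<and> \<alpha>2 - \<alpha>1 = - of_nat k)"
    and a32: "\<not> (\<exists>k::nat. k \<ge> 2 \<and> \<alpha>3 - \<alpha>2 = - of_nat k)"
    and b_def: "\<And>n. b n = (-1) ^ n * pochhammer (2 + \<alpha>3 - \<alpha>2) n / (\<beta>3 - \<beta>2) ^ n"
    and c_def: "\<And>n. c n = (-1) ^ n * pochhammer (2 + \<alpha>2 - \<alpha>1) n / (\<beta>2 - \<beta>1) ^ n"
    and \<omega>_def: "\<And>n. \<omega> n = (\<Sum>k\<le>n. c k * b (n - k))"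
    and dir: "\<And>k::int. \<theta> \<noteq> Arg (\<beta>1 - \<beta>2) + 2 * pi * of_int k"
             "\<And>k::int. \<theta> \<noteq> Arg (\<beta>1 - \<beta>3) + 2 * pi * of_int k"
             "\<And>k::int. \<theta> \<noteq> Arg (\<beta>2 - \<beta>3) + 2 * pi * of_int k"
    and h: "borel_continuation \<omega> \<theta> h K"
    and x: "x \<noteq> 0" "Re (cis \<theta> / x) > K" "Re (cis \<theta> / x) > 0"
  shows "(\<beta>3 - \<beta>1) * ray_laplace \<theta> h x =
      (\<Sum>l=0..N-4. ((\<beta>2 - \<beta>1) * b l + (\<beta>3 - \<beta>2) * c l) * x ^ l *
          (\<Sum>s=0..N-4-l. (-1) ^ s * pochhammer (4 + of_nat l + \<alpha>3 - \<alpha>1) s / (\<beta>3 - \<beta>1) ^ s * x ^ s))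
     + x ^ (N - 3) *
       (b (N - 3) * (\<beta>2 - \<beta>1) *
          ray_laplace \<theta> (\<lambda>\<xi>. (1 + \<xi> / (\<beta>3 - \<beta>2)) powr (1 + \<alpha>2 - \<alpha>1) * inverse (1 + \<xi> / (\<beta>3 - \<beta>1))) x
        + c (N - 3) * (\<beta>3 - \<beta>2) *
          ray_laplace \<theta> (\<lambda>\<xi>. (1 + \<xi> / (\<beta>2 - \<beta>1)) powr (1 + \<alpha>3 - \<alpha>2) * inverse (1 + \<xi> / (\<beta>3 - \<beta>1))) x)"
proof -
  define p where "p = \<beta>2 - \<beta>1"
  define q where "q = \<beta>3 - \<beta>2"
  define r where "r = \<beta>3 - \<beta>1"
  define A where "A = 2 + \<alpha>2 - \<alpha>1"
  define B where "B = 2 + \<alpha>3 - \<alpha>2"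
  define \<sigma> where "\<sigma> = A + B"
  define M where "M = Suc (N - 4)"
  define w where "w = cis \<theta> / x"
  have p0: "p \<noteq> 0" using dist by (auto simp: p_def)
  have q0: "q \<noteq> 0" using dist by (auto simp: q_def)
  have r0: "r \<noteq> 0" using dist by (auto simp: r_def)
  have rpq: "r = p + q" by (simp add: p_def q_def r_def)
  have bdef': "\<And>n. b n = (-1) ^ n * pochhammer B n / q ^ n" using b_def by (simp add: B_def q_def)
  have cdef': "\<And>n. c n = (-1) ^ n * pochhammer A n / p ^ n" using c_def by (simp add: A_def p_def)
  have rec: "\<And>n. r * \<omega> (Suc n) + (\<sigma> + of_nat n) * \<omega> n = q * c (Suc n) + p * b (Suc n)"
    using omega_rec[OF p0 q0 bdef' cdef' \<omega>_def] by (simp add: rpq \<sigma>_def)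
  have cS: "\<And>k. p * c (Suc k) = - (A + of_nat k) * c k"
    using p0 by (simp add: cdef' pochhammer_rec' field_simps)
  have bS: "\<And>k. q * b (Suc k) = - (B + of_nat k) * b k"
    using q0 by (simp add: bdef' pochhammer_rec' field_simps)
  have NN: "of_nat (N - 4) = (of_nat N - 4 :: complex)" using N(2) by (simp add: of_nat_diff)
  have NM: "of_nat M = (of_nat N - 3 :: complex)" using N(2) by (simp add: M_def of_nat_diff)
  have \<sigma>N: "\<sigma> + of_nat (N - 4) = 0"
    unfolding NN \<sigma>_def A_def B_def using N(1) by (simp add: algebra_simps)
  have eA: "- A - of_nat M = 1 + \<alpha>3 - \<alpha>2"
    unfolding NM A_def using N(1) by (simp add: algebra_simps)
  have eB: "- B - of_nat M = 1 + \<alpha>2 - \<alpha>1"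
    unfolding NM B_def using N(1) by (simp add: algebra_simps)
  have dp: "\<And>k::int. \<theta> \<noteq> Arg (- p) + 2 * pi * of_int k" using dir(1) by (simp add: p_def)
  have dr: "\<And>k::int. \<theta> \<noteq> Arg (- r) + 2 * pi * of_int k" using dir(2) by (simp add: r_def)
  have dq: "\<And>k::int. \<theta> \<noteq> Arg (- q) + 2 * pi * of_int k" using dir(3) by (simp add: q_def)
  obtain S r1 C where S: "open S" "0 < r1" "ball 0 r1 \<subseteq> S" "\<And>t. t \<ge> 0 \<Longrightarrow> of_real t * cis \<theta> \<in> S"
    "h holomorphic_on S" "\<And>\<zeta>. \<zeta> \<in> ball 0 r1 \<Longrightarrow> (\<lambda>n. \<omega> n / fact n * \<zeta> ^ n) sums h \<zeta>"
    using h unfolding borel_continuation_def by blast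
  have S0: "0 \<in> S" using S(2,3) by auto
  have hH: "h has_fps_expansion Abs_fps (\<lambda>n. \<omega> n / fact n)"
    by (rule sums_has_fps_expansion[OF S(2) S(6)])
  have ev: "eventually (\<lambda>z. (r + z) * deriv h z + \<sigma> * h z
            - (q * c 1 * (1 + z / p) powr (- A - 1) + p * b 1 * (1 + z / q) powr (- B - 1)) = 0) (nhds 0)"
    by (rule ode_near0[OF p0 q0 hH cdef' bdef' rec])
  obtain D where D: "open D" "connected D" "D \<subseteq> S" "0 \<in> D" "\<And>t. t \<ge> 0 \<Longrightarrow> of_real t * cis \<theta> \<in> D"
    "\<And>z. z \<in> D \<Longrightarrow> 1 + z / p \<notin> \<real>\<^sub>\<le>\<^sub>0" "\<And>z. z \<in> D \<Longrightarrow> 1 + z / q \<notin> \<real>\<^sub>\<le>\<^sub>0"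
    using domain_exists[OF S(1) S0 S(4) p0 q0 dp dq] by blast
  have holD: "h holomorphic_on D" using S(5) D(3) holomorphic_on_subset by blast
  have base: "(r + z) * deriv h z + \<sigma> * h z
      = q * c 1 * (1 + z / p) powr (- A - 1) + p * b 1 * (1 + z / q) powr (- B - 1)" if z: "z \<in> D" for z
  proof -
    define Ef where "Ef = (\<lambda>z. (r + z) * deriv h z + \<sigma> * h z
            - (q * c 1 * (1 + z / p) powr (- A - 1) + p * b 1 * (1 + z / q) powr (- B - 1)))"
    have hol: "Ef holomorphic_on D"
      unfolding Ef_def using D(6,7)
      by (intro holomorphic_intros holomorphic_deriv holD D(1)) auto
    from ev obtain U where U: "open U" "0 \<in> U" "\<And>z. z \<in> U \<Longrightarrow> Ef z = 0"
      unfolding eventually_nhds Ef_def by blast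
    have "0 islimpt (U \<inter> D)"
      using U(1,2) D(1,4) by (intro interior_limit_point) (auto simp: interior_open)
    moreover have "U \<inter> D \<subseteq> D" by blast
    moreover have "\<And>z. z \<in> U \<inter> D \<Longrightarrow> Ef z = 0" using U(3) by blast
    ultimately have "Ef z = 0"
      using analytic_continuation[OF hol D(1) D(2) _ D(4) _ _ z] by blast
    thus ?thesis by (simp add: Ef_def)
  qed
  have hd: "(r + z) * (deriv ^^ Suc (N - 4)) h z + (\<sigma> + of_nat (N - 4)) * (deriv ^^ (N - 4)) h z
      = q * c (Suc (N - 4)) * (1 + z / p) powr (- A - of_nat (Suc (N - 4)))
        + p * b (Suc (N - 4)) * (1 + z / q) powr (- B - of_nat (Suc (N - 4)))" if "z \<in> D" for z
    by (rule higher_deriv_ode[OF D(1) holD p0 q0 D(6) D(7) cS bS base that])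
  have TM: "(deriv ^^ M) h (of_real t * cis \<theta>) = inverse r *
      (q * c M * ((1 + of_real t * cis \<theta> / p) powr (1 + \<alpha>3 - \<alpha>2) * inverse (1 + of_real t * cis \<theta> / r))
     + p * b M * ((1 + of_real t * cis \<theta> / q) powr (1 + \<alpha>2 - \<alpha>1) * inverse (1 + of_real t * cis \<theta> / r)))"
    if t: "t \<ge> 0" for t
  proof -
    define z where "z = of_real t * cis \<theta>"
    obtain \<delta> where \<delta>: "\<delta> > 0" and bd: "\<And>t. t \<ge> 0 \<Longrightarrow> \<delta> \<le> norm (of_real t * cis \<theta> - (- r))"
      using ray_dist[of "- r" \<theta>] r0 dr by auto
    have rz: "r + z \<noteq> 0" using bd[OF t] \<delta> by (auto simp: z_def add.commute)
    have e1: "(r + z) * (deriv ^^ M) h z = q * c M * (1 + z / p) powr (1 + \<alpha>3 - \<alpha>2) + p * b M * (1 + z / q) powr (1 + \<alpha>2 - \<alpha>1)"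
    proof -
      have "(r + z) * (deriv ^^ M) h z + 0 * (deriv ^^ (N - 4)) h z
          = q * c M * (1 + z / p) powr (- A - of_nat M) + p * b M * (1 + z / q) powr (- B - of_nat M)"
        using hd[OF D(5)[OF t]] unfolding \<sigma>N M_def[symmetric] z_def .
      thus ?thesis unfolding eA eB by simp
    qed
    have i1: "inverse r * inverse (1 + z / r) = inverse (r + z)"
      using r0 rz by (simp add: field_simps)
    have "(deriv ^^ M) h z = inverse (r + z) * (q * c M * (1 + z / p) powr (1 + \<alpha>3 - \<alpha>2) + p * b M * (1 + z / q) powr (1 + \<alpha>2 - \<alpha>1))"
      using e1 rz by (simp add: field_simps)
    also have "\<dots> = inverse r * (q * c M * ((1 + z / p) powr (1 + \<alpha>3 - \<alpha>2) * inverse (1 + z / r))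
     + p * b M * ((1 + z / q) powr (1 + \<alpha>2 - \<alpha>1) * inverse (1 + z / r)))"
      unfolding i1[symmetric] by (simp add: algebra_simps)
    finally show ?thesis by (simp add: z_def)
  qed
  define \<phi> where "\<phi> = (\<lambda>k t. (deriv ^^ k) h (of_real t * cis \<theta>))"
  have d\<phi>: "(\<phi> k has_vector_derivative (\<phi> (Suc k) t * cis \<theta>)) (at t within {0..})" if t: "t \<ge> 0" for k t
  proof -
    have "((\<lambda>z. (deriv ^^ k) h (z * cis \<theta>)) has_field_derivative ((deriv ^^ Suc k) h (of_real t * cis \<theta>) * cis \<theta>)) (at (of_real t))"
    proof (rule DERIV_chain2[of "(deriv ^^ k) h"])
      show "((deriv ^^ k) h has_field_derivative (deriv ^^ Suc k) h (of_real t * cis \<theta>)) (at (of_real t * cis \<theta>))"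
        by (rule has_field_derivative_higher_deriv[OF holD D(1) D(5)[OF t]])
      show "((\<lambda>z. z * cis \<theta>) has_field_derivative cis \<theta>) (at (of_real t))"
        by (auto intro!: derivative_eq_intros)
    qed
    from has_vector_derivative_real_field[OF this] show ?thesis by (simp add: \<phi>_def)
  qed
  have c\<phi>: "continuous_on {0..} (\<phi> k)" for k
    by (rule continuous_on_vector_derivative) (use d\<phi> in auto)
  have Rew: "Re w > 0" using x(3) by (simp add: w_def)
  have hw: "0 < Re w / 2" using Rew by simp
  have gG1: "good (\<lambda>t. (1 + of_real t * cis \<theta> / q) powr (1 + \<alpha>2 - \<alpha>1) * inverse (1 + of_real t * cis \<theta> / r)) (Re w)"
    using good_mult[OF good_powr_ray[OF q0 dq hw] good_inverse_ray[OF r0 dr hw]] by simp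
  have gG2: "good (\<lambda>t. (1 + of_real t * cis \<theta> / p) powr (1 + \<alpha>3 - \<alpha>2) * inverse (1 + of_real t * cis \<theta> / r)) (Re w)"
    using good_mult[OF good_powr_ray[OF p0 dp hw] good_inverse_ray[OF r0 dr hw]] by simp
  have gM: "good (\<phi> M) (Re w)"
  proof (rule good_cong)
    show "good (\<lambda>t. inverse r *
      (q * c M * ((1 + of_real t * cis \<theta> / p) powr (1 + \<alpha>3 - \<alpha>2) * inverse (1 + of_real t * cis \<theta> / r))
     + p * b M * ((1 + of_real t * cis \<theta> / q) powr (1 + \<alpha>2 - \<alpha>1) * inverse (1 + of_real t * cis \<theta> / r)))) (Re w)"
      by (intro good_cmult good_add gG1 gG2)
    show "inverse r *
      (q * c M * ((1 + of_real t * cis \<theta> / p) powr (1 + \<alpha>3 - \<alpha>2) * inverse (1 + of_real t * cis \<theta> / r))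
     + p * b M * ((1 + of_real t * cis \<theta> / q) powr (1 + \<alpha>2 - \<alpha>1) * inverse (1 + of_real t * cis \<theta> / r))) = \<phi> M t"
      if "t \<ge> 0" for t using TM[OF that] by (simp add: \<phi>_def)
  qed
  have gcis: "good (\<lambda>t. \<phi> (Suc k) t * cis \<theta>) (Re w)" if "good (\<phi> (Suc k)) (Re w)" for k
    by (rule good_cong[OF good_cmult[OF that, of "cis \<theta>"]]) (simp add: mult.commute)
  have gj: "good (\<phi> (M - j)) (Re w)" if "j \<le> M" for j
    using that
  proof (induction j)
    case 0 then show ?case using gM by simp
  next
    case (Suc j)
    have e: "Suc (M - Suc j) = M - j" using Suc.prems by simp
    have "good (\<phi> (Suc (M - Suc j))) (Re w)" unfolding e using Suc by simp
    from good_antideriv[OF Rew d\<phi> gcis[OF this]] show ?case .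
  qed
  have gk: "good (\<phi> k) (Re w)" if "k \<le> M" for k
    using gj[of "M - k"] that by simp
  define L where "L = (\<lambda>k. integral {0..} (\<lambda>t. \<phi> k t * exp (- (of_real t * w)) * w))"
  have \<phi>0: "\<phi> k 0 = \<omega> k" for k
  proof -
    have "fps_nth (Abs_fps (\<lambda>n. \<omega> n / fact n)) k = (deriv ^^ k) h 0 / fact k"
      by (rule fps_nth_fps_expansion[OF hH])
    thus ?thesis by (simp add: \<phi>_def)
  qed
  have xw: "cis \<theta> = x * w" using x(1) by (simp add: w_def)
  have Lstep: "L k = \<omega> k + x * L (Suc k)" if k: "k < M" for k
  proof -
    have c': "continuous_on {0..} (\<lambda>t. \<phi> (Suc k) t * cis \<theta>)"
      by (intro continuous_intros c\<phi>)
    have "L k = \<phi> k 0 + integral {0..} (\<lambda>t. \<phi> (Suc k) t * cis \<theta> * exp (- (of_real t * w)))"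
      unfolding L_def
      by (rule lap_ibp[OF Rew d\<phi> c' gk gcis[OF gk]]) (use k in auto)
    also have "(\<lambda>t. \<phi> (Suc k) t * cis \<theta> * exp (- (of_real t * w))) = (\<lambda>t. x * (\<phi> (Suc k) t * exp (- (of_real t * w)) * w))"
      unfolding xw by (simp add: mult_ac)
    finally show ?thesis by (simp add: \<phi>0 L_def)
  qed
  have Lsum: "L 0 = (\<Sum>k<j. \<omega> k * x ^ k) + x ^ j * L j" if "j \<le> M" for j
    using that
  proof (induction j)
    case 0 then show ?case by simp
  next
    case (Suc j)
    have "L j = \<omega> j + x * L (Suc j)" using Suc.prems by (intro Lstep) simp
    thus ?case using Suc by (simp add: algebra_simps)
  qed
  have expw: "exp (- (of_real t * cis \<theta>) / x) * (cis \<theta> / x) = exp (- (of_real t * w)) * w" for t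
    by (simp add: w_def)
  have RL: "ray_laplace \<theta> g x = integral {0..} (\<lambda>t. g (of_real t * cis \<theta>) * exp (- (of_real t * w)) * w)" for g
    unfolding ray_laplace_def by (simp only: mult.assoc expw)
  have L0: "L 0 = ray_laplace \<theta> h x" unfolding RL L_def by (simp add: \<phi>_def)
  define G1 where "G1 = (\<lambda>\<xi>. (1 + \<xi> / q) powr (1 + \<alpha>2 - \<alpha>1) * inverse (1 + \<xi> / r))"
  define G2 where "G2 = (\<lambda>\<xi>. (1 + \<xi> / p) powr (1 + \<alpha>3 - \<alpha>2) * inverse (1 + \<xi> / r))"
  have rnz: "1 + of_real t * cis \<theta> / r \<noteq> 0" if "t \<ge> 0" for t
    using slit_avoid[OF r0 dr that] by auto
  have cG1: "continuous_on {0..} (\<lambda>t. G1 (of_real t * cis \<theta>))"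
    unfolding G1_def by (intro continuous_on_mult cont_powr_ray cont_inv_ray q0 dq r0 dr)
  have cG2: "continuous_on {0..} (\<lambda>t. G2 (of_real t * cis \<theta>))"
    unfolding G2_def by (intro continuous_on_mult cont_powr_ray cont_inv_ray p0 dp r0 dr)
  have I1: "(\<lambda>t. G1 (of_real t * cis \<theta>) * exp (- (of_real t * w)) * w) integrable_on {0..}"
    by (intro integrable_on_mult_left lap_integrable cG1) (use gG1 in \<open>simp add: G1_def\<close>)
  have I2: "(\<lambda>t. G2 (of_real t * cis \<theta>) * exp (- (of_real t * w)) * w) integrable_on {0..}"
    by (intro integrable_on_mult_left lap_integrable cG2) (use gG2 in \<open>simp add: G2_def\<close>)
  have LM: "L M = inverse r * (q * c M * ray_laplace \<theta> G2 x + p * b M * ray_laplace \<theta> G1 x)"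
  proof -
    have "L M = integral {0..} (\<lambda>t. inverse r * (q * c M * (G2 (of_real t * cis \<theta>) * exp (- (of_real t * w)) * w)
        + p * b M * (G1 (of_real t * cis \<theta>) * exp (- (of_real t * w)) * w)))"
      unfolding L_def
    proof (rule integral_cong)
      fix t :: real assume "t \<in> {0..}"
      hence t: "t \<ge> 0" by simp
      show "\<phi> M t * exp (- (of_real t * w)) * w = inverse r * (q * c M * (G2 (of_real t * cis \<theta>) * exp (- (of_real t * w)) * w)
        + p * b M * (G1 (of_real t * cis \<theta>) * exp (- (of_real t * w)) * w))"
        unfolding \<phi>_def TM[OF t] G1_def G2_def by (simp add: algebra_simps)
    qed
    also have "\<dots> = inverse r * (q * c M * integral {0..} (\<lambda>t. G2 (of_real t * cis \<theta>) * exp (- (of_real t * w)) * w)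
        + p * b M * integral {0..} (\<lambda>t. G1 (of_real t * cis \<theta>) * exp (- (of_real t * w)) * w))"
      by (simp only: integral_mult_right integral_add[OF integrable_on_mult_right[OF I2] integrable_on_mult_right[OF I1]])
    finally show ?thesis by (simp only: RL)
  qed
  have poly: "r * (\<Sum>k<M. \<omega> k * x ^ k) =
    (\<Sum>l=0..N-4. (p * b l + q * c l) * x ^ l * (\<Sum>s=0..N-4-l. (-1) ^ s * pochhammer (\<sigma> + of_nat l) s / r ^ s * x ^ s))"
    unfolding M_def
  proof (rule poly_part[OF r0])
    show "r * \<omega> 0 = p * b 0 + q * c 0" by (simp add: \<omega>_def bdef' cdef' rpq)
    show "r * \<omega> (Suc n) + (\<sigma> + of_nat n) * \<omega> n = p * b (Suc n) + q * c (Suc n)" for n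
      using rec[of n] by (simp add: add.commute)
  qed
  have main: "r * ray_laplace \<theta> h x = (\<Sum>l=0..N-4. (p * b l + q * c l) * x ^ l *
        (\<Sum>s=0..N-4-l. (-1) ^ s * pochhammer (\<sigma> + of_nat l) s / r ^ s * x ^ s))
      + x ^ M * (b M * p * ray_laplace \<theta> G1 x + c M * q * ray_laplace \<theta> G2 x)"
  proof -
    have "r * ray_laplace \<theta> h x = r * (\<Sum>k<M. \<omega> k * x ^ k) + x ^ M * (r * L M)"
      unfolding L0[symmetric] Lsum[OF order.refl] by (simp add: algebra_simps)
    also have "r * L M = b M * p * ray_laplace \<theta> G1 x + c M * q * ray_laplace \<theta> G2 x"
      unfolding LM using r0 by (simp add: field_simps)
    finally show ?thesis unfolding poly .
  qed
  have pe: "\<beta>2 - \<beta>1 = p" "\<beta>3 - \<beta>2 = q" "\<beta>3 - \<beta>1 = r" by (simp_all add: p_def q_def r_def)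
  have se: "\<And>l. 4 + of_nat l + \<alpha>3 - \<alpha>1 = \<sigma> + of_nat l" by (simp add: \<sigma>_def A_def B_def algebra_simps)
  have Me: "N - 3 = M" using N(2) by (simp add: M_def)
  show ?thesis
    unfolding pe se Me using main by (simp add: G1_def G2_def)
qed

end
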